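(* Under the standing assumptions below, let $\gamma>0$ and let $\{(y^t,z^t,x^t)\}$ be generated by the PR splitting iteration. Then there exists $\kappa>0$ (depending only on $\gamma$ and $L$) such that for all $t\ge1$, \[ \operatorname{dist}\big(0,\partial\mathcal{P}_\gamma(y^t,z^t,x^t)\big)\le\kappa\|y^{t+1}-y^t\| . \]
   Context: Standing assumptions: $f:\mathbb{R}^n\to\mathbb{R}$ is differentiable and strongly convex with modulus at least $\sigma>0$, and $\nabla f$ is Lipschitz continuous with modulus at most $L>0$. The function $g:\mathbb{R}^n\to(-\infty,\infty]$ is proper and lower semicontinuous, and for the $\gamma>0$ used, $\operatorname{Argmin}_u\{\gamma g(u)+\frac12\|u-w\|^2\}$ is nonempty for every $w\in\mathbb{R}^n$. PR splitting iteration: given $x^0$ and $\gamma>0$, for $t=0,1,2,\dots$: $y^{t+1}=\operatorname{argmin}_y\{f(y)+\frac{1}{2\gamma}\|y-x^t\|^2\}$; $z^{t+1}\in\operatorname{Argmin}_z\{g(z)+\frac{1}{2\gamma}\|2y^{t+1}-x^t-z\|^2\}$; $x^{t+1}=x^t+2(z^{t+1}-y^{t+1})$. Merit function: $\mathcal{P}_\gamma(y,z,x):=f(y)+g(z)-\frac{3}{2\gamma}\|y-z\|^2+\frac{1}{\gamma}\langle x-y,z-y\rangle$, regarded as a function on $\mathbb{R}^n\times\mathbb{R}^n\times\mathbb{R}^n$; $\partial\mathcal{P}_\gamma$ is its limiting subdifferential: $v\in\partial h(x)$ iff there exist $x^t\to x$ with $h(x^t)\to h(x)$ and $v^t\to v$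 such that $\liminf_{z\to x^t, z\ne x^t}\frac{h(z)-h(x^t)-\langle v^t,z-x^t\rangle}{\|z-x^t\|}\ge0$ for each $t$. *)

theory Defs
  imports "HOL-Analysis.Analysis" "HOL-Library.Extended_Real" "HOL-Library.Liminf_Limsup"
begin

definition strongly_convex :: "real \<Rightarrow> ('a::real_inner \<Rightarrow> real) \<Rightarrow> bool" where
  "strongly_convex \<sigma> f \<longleftrightarrow> convex_on UNIV (\<lambda>x. f x - (\<sigma> / 2) * (norm x)\<^sup>2)"

definition proper_fun :: "('a \<Rightarrow> ereal) \<Rightarrow> bool" where
  "proper_fun g \<longleftrightarrow> (\<forall>x. g x \<noteq> -\<infinity>) \<and> (\<exists>x. g x \<noteq> \<infinity>)"

definition lsc_fun :: "('a::topological_space \<Rightarrow> ereal) \<Rightarrow> bool" where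
  "lsc_fun g \<longleftrightarrow> (\<forall>a. closed {x. g x \<le> a})"

definition frechet_subdiff :: "('a::real_inner \<Rightarrow> ereal) \<Rightarrow> 'a \<Rightarrow> 'a set" where
  "frechet_subdiff h x = {v. \<bar>h x\<bar> \<noteq> \<infinity> \<and>
     Liminf (at x) (\<lambda>z. (h z - h x - ereal (v \<bullet> (z - x))) / ereal (norm (z - x))) \<ge> 0}"

definition limiting_subdiff :: "('a::real_inner \<Rightarrow> ereal) \<Rightarrow> 'a \<Rightarrow> 'a set" where
  "limiting_subdiff h x = {v. \<bar>h x\<bar> \<noteq> \<infinity> \<and>
     (\<exists>xs vs. xs \<longlonglongrightarrow> x \<and> (\<lambda>t. h (xs t)) \<longlonglongrightarrow> h x \<and> vs \<longlonglongrightarrow> v \<and>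
        (\<forall>t. vs t \<in> frechet_subdiff h (xs t)))}"

definition merit :: "real \<Rightarrow> ('a::real_inner \<Rightarrow> real) \<Rightarrow> ('a \<Rightarrow> ereal) \<Rightarrow> 'a \<times> 'a \<times> 'a \<Rightarrow> ereal" where
  "merit \<gamma> f g = (\<lambda>(y, z, x). ereal (f y) + g z +
      ereal (- (3 / (2 * \<gamma>)) * (norm (y - z))\<^sup>2 + (1 / \<gamma>) * ((x - y) \<bullet> (z - y))))"

end

theory Submission imports Defs begin

lemma frechet_merit:
  fixes f :: "'a::euclidean_space \<Rightarrow> real" and g :: "'a \<Rightarrow> ereal"
  assumes gp: "\<gamma> > 0" and deriv: "(f has_derivative (\<lambda>h. f' Y \<bullet> h)) (at Y)"
    and gZ: "g Z = ereal gz" and gm: "\<forall>v. g v \<noteq> -\<infinity>"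
    and gmin: "\<forall>v. g Z + ereal ((norm (A - Z))\<^sup>2 / (2 * \<gamma>)) \<le> g v + ereal ((norm (A - v))\<^sup>2 / (2 * \<gamma>))"
  shows "(f' Y + (1/\<gamma>) *\<^sub>R (2 *\<^sub>R Z - Y - X),
          (1/\<gamma>) *\<^sub>R (A - Z) + (1/\<gamma>) *\<^sub>R (2 *\<^sub>R Y - 3 *\<^sub>R Z + X),
          (1/\<gamma>) *\<^sub>R (Z - Y)) \<in> frechet_subdiff (merit \<gamma> f g) (Y, Z, X)"
proof -
  define w where "w = (f' Y + (1/\<gamma>) *\<^sub>R (2 *\<^sub>R Z - Y - X),
          (1/\<gamma>) *\<^sub>R (A - Z) + (1/\<gamma>) *\<^sub>R (2 *\<^sub>R Y - 3 *\<^sub>R Z + X),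
          (1/\<gamma>) *\<^sub>R (Z - Y))"
  define G where "G = (\<lambda>p::'a\<times>'a\<times>'a. f (fst p) + ((A - Z) \<bullet> (A - Z) - (A - fst (snd p)) \<bullet> (A - fst (snd p))) / (2*\<gamma>)
      + (- (3 / (2 * \<gamma>)) * ((fst p - fst (snd p)) \<bullet> (fst p - fst (snd p))) + (1 / \<gamma>) * ((snd (snd p) - fst p) \<bullet> (fst (snd p) - fst p))))"
  have D: "(G has_derivative (\<lambda>h. w \<bullet> h)) (at (Y,Z,X))"
  proof -
    have d1: "((\<lambda>p::'a\<times>'a\<times>'a. f (fst p)) has_derivative (\<lambda>h. f' Y \<bullet> fst h)) (at (Y,Z,X))"
    proof -
      have "(fst has_derivative fst) (at (Y,Z,X))" by (rule has_derivative_fst[OF has_derivative_ident])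
      from has_derivative_compose[OF this] deriv show ?thesis by simp
    qed
    show ?thesis unfolding G_def
    apply (rule derivative_eq_intros refl d1 | (insert gp, simp; fail))+
     apply (rule ext)
     apply (insert gp)
     apply (auto simp: w_def inner_simps algebra_simps inner_commute add_divide_distrib diff_divide_distrib)
    done
  qed
  define Q where "Q = (\<lambda>p::'a\<times>'a\<times>'a. - (3 / (2 * \<gamma>)) * (norm (fst p - fst (snd p)))\<^sup>2 + (1 / \<gamma>) * ((snd (snd p) - fst p) \<bullet> (fst (snd p) - fst p)))"
  have mer: "merit \<gamma> f g p = ereal (f (fst p)) + g (fst (snd p)) + ereal (Q p)" for p
    by (cases p) (auto simp: merit_def Q_def)
  have GQ: "G p = f (fst p) + ((norm (A - Z))\<^sup>2 - (norm (A - fst (snd p)))\<^sup>2) / (2*\<gamma>) + Q p" for p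
    by (simp add: G_def Q_def power2_norm_eq_inner)
  let ?p = "(Y,Z,X)"
  have lim: "((\<lambda>q. (G q - G ?p - w \<bullet> (q - ?p)) / norm (q - ?p)) \<longlongrightarrow> 0) (at ?p)"
    using D unfolding has_derivative_at_within by (simp add: divide_inverse mult.commute)
  have fin: "\<bar>merit \<gamma> f g ?p\<bar> \<noteq> \<infinity>"
    using mer[of ?p] gZ by simp
  have ineq: "ereal ((G q - G ?p - w \<bullet> (q - ?p)) / norm (q - ?p))
     \<le> (merit \<gamma> f g q - merit \<gamma> f g ?p - ereal (w \<bullet> (q - ?p))) / ereal (norm (q - ?p))"
    if "q \<noteq> ?p" for q
  proof -
    have np: "norm (q - ?p) > 0" using that by simp
    show ?thesis
    proof (cases "g (fst (snd q))")
      case (real r)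
      have "g Z + ereal ((norm (A - Z))\<^sup>2 / (2 * \<gamma>)) \<le> g (fst (snd q)) + ereal ((norm (A - fst (snd q)))\<^sup>2 / (2 * \<gamma>))"
        using gmin by blast
      hence r1: "gz + (norm (A - Z))\<^sup>2 / (2 * \<gamma>) \<le> r + (norm (A - fst (snd q)))\<^sup>2 / (2 * \<gamma>)"
        using gZ real by simp
      have r2: "G q - G ?p \<le> (f (fst q) + r + Q q) - (f Y + gz + Q ?p)"
        using r1 unfolding GQ by (simp add: diff_divide_distrib)
      have "(G q - G ?p - w \<bullet> (q - ?p)) / norm (q - ?p) \<le> ((f (fst q) + r + Q q) - (f Y + gz + Q ?p) - w \<bullet> (q - ?p)) / norm (q - ?p)"
        using r2 np by (intro divide_right_mono) auto
      thus ?thesis using np by (simp add: mer real gZ)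
    next
      case PInf
      then show ?thesis using np by (simp add: mer gZ)
    next
      case MInf
      then show ?thesis using gm by simp
    qed
  qed
  have "Liminf (at ?p) (\<lambda>q. ereal ((G q - G ?p - w \<bullet> (q - ?p)) / norm (q - ?p))) = ereal 0"
    by (rule lim_imp_Liminf) (simp_all add: lim)
  moreover have "Liminf (at ?p) (\<lambda>q. ereal ((G q - G ?p - w \<bullet> (q - ?p)) / norm (q - ?p)))
     \<le> Liminf (at ?p) (\<lambda>q. (merit \<gamma> f g q - merit \<gamma> f g ?p - ereal (w \<bullet> (q - ?p))) / ereal (norm (q - ?p)))"
    by (rule Liminf_mono) (auto simp: eventually_at_filter ineq)
  ultimately show ?thesis using fin unfolding frechet_subdiff_def w_def[symmetric] by (simp add: zero_ereal_def)
qed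
theorem mainTheorem5:
  shows "\<forall>(\<gamma>::real) (L::real). \<gamma> > 0 \<longrightarrow> L > 0 \<longrightarrow>
    (\<exists>\<kappa>>0. \<forall>(f :: 'a::euclidean_space \<Rightarrow> real) (f' :: 'a \<Rightarrow> 'a) (g :: 'a \<Rightarrow> ereal)
        (\<sigma>::real) (y :: nat \<Rightarrow> 'a) (z :: nat \<Rightarrow> 'a) (x :: nat \<Rightarrow> 'a).
      \<sigma> > 0 \<longrightarrow>
      (\<forall>u. (f has_derivative (\<lambda>h. f' u \<bullet> h)) (at u)) \<longrightarrow>
      strongly_convex \<sigma> f \<longrightarrow>
      L-lipschitz_on UNIV f' \<longrightarrow>
      proper_fun g \<longrightarrow> lsc_fun g \<longrightarrow>
      (\<forall>w. \<exists>u. \<forall>v. ereal \<gamma> * g u + ereal ((norm (u - w))\<^sup>2 / 2)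
                     \<le> ereal \<gamma> * g v + ereal ((norm (v - w))\<^sup>2 / 2)) \<longrightarrow>
      (\<forall>t. \<forall>v. f (y (Suc t)) + (norm (y (Suc t) - x t))\<^sup>2 / (2 * \<gamma>)
                 \<le> f v + (norm (v - x t))\<^sup>2 / (2 * \<gamma>)) \<longrightarrow>
      (\<forall>t. \<forall>v. g (z (Suc t)) + ereal ((norm (2 *\<^sub>R y (Suc t) - x t - z (Suc t)))\<^sup>2 / (2 * \<gamma>))
                 \<le> g v + ereal ((norm (2 *\<^sub>R y (Suc t) - x t - v))\<^sup>2 / (2 * \<gamma>))) \<longrightarrow>
      (\<forall>t. x (Suc t) = x t + 2 *\<^sub>R (z (Suc t) - y (Suc t))) \<longrightarrow>
      (\<forall>t\<ge>1. limiting_subdiff (merit \<gamma> f g) (y t, z t, x t) \<noteq> {} \<and>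
         infdist 0 (limiting_subdiff (merit \<gamma> f g) (y t, z t, x t)) \<le> \<kappa> * norm (y (Suc t) - y t)))"
proof (intro allI impI)
  fix \<gamma> L :: real assume gp: "\<gamma> > 0" and Lp: "L > 0"
  show "\<exists>\<kappa>>0. \<forall>(f :: 'a::euclidean_space \<Rightarrow> real) (f' :: 'a \<Rightarrow> 'a) (g :: 'a \<Rightarrow> ereal)
        (\<sigma>::real) (y :: nat \<Rightarrow> 'a) (z :: nat \<Rightarrow> 'a) (x :: nat \<Rightarrow> 'a).
      \<sigma> > 0 \<longrightarrow>
      (\<forall>u. (f has_derivative (\<lambda>h. f' u \<bullet> h)) (at u)) \<longrightarrow>
      strongly_convex \<sigma> f \<longrightarrow>
      L-lipschitz_on UNIV f' \<longrightarrow>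
      proper_fun g \<longrightarrow> lsc_fun g \<longrightarrow>
      (\<forall>w. \<exists>u. \<forall>v. ereal \<gamma> * g u + ereal ((norm (u - w))\<^sup>2 / 2)
                     \<le> ereal \<gamma> * g v + ereal ((norm (v - w))\<^sup>2 / 2)) \<longrightarrow>
      (\<forall>t. \<forall>v. f (y (Suc t)) + (norm (y (Suc t) - x t))\<^sup>2 / (2 * \<gamma>)
                 \<le> f v + (norm (v - x t))\<^sup>2 / (2 * \<gamma>)) \<longrightarrow>
      (\<forall>t. \<forall>v. g (z (Suc t)) + ereal ((norm (2 *\<^sub>R y (Suc t) - x t - z (Suc t)))\<^sup>2 / (2 * \<gamma>))
                 \<le> g v + ereal ((norm (2 *\<^sub>R y (Suc t) - x t - v))\<^sup>2 / (2 * \<gamma>))) \<longrightarrow>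
      (\<forall>t. x (Suc t) = x t + 2 *\<^sub>R (z (Suc t) - y (Suc t))) \<longrightarrow>
      (\<forall>t\<ge>1. limiting_subdiff (merit \<gamma> f g) (y t, z t, x t) \<noteq> {} \<and>
         infdist 0 (limiting_subdiff (merit \<gamma> f g) (y t, z t, x t)) \<le> \<kappa> * norm (y (Suc t) - y t))"
  proof (intro exI[of _ "2 * (1 + \<gamma> * L) / \<gamma>"] conjI allI impI)
    show "0 < 2 * (1 + \<gamma> * L) / \<gamma>" using gp Lp by (simp add: pos_add_strict)
    fix f :: "'a::euclidean_space \<Rightarrow> real" and f' :: "'a \<Rightarrow> 'a" and g :: "'a \<Rightarrow> ereal"
      and \<sigma> :: real and y z x :: "nat \<Rightarrow> 'a" and t :: nat
    assume deriv: "\<forall>u. (f has_derivative (\<lambda>h. f' u \<bullet> h)) (at u)"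
      and lip: "L-lipschitz_on UNIV f'" and gprop: "proper_fun g"
      and ymin: "\<forall>t. \<forall>v. f (y (Suc t)) + (norm (y (Suc t) - x t))\<^sup>2 / (2 * \<gamma>)
                 \<le> f v + (norm (v - x t))\<^sup>2 / (2 * \<gamma>)"
      and zmin: "\<forall>t. \<forall>v. g (z (Suc t)) + ereal ((norm (2 *\<^sub>R y (Suc t) - x t - z (Suc t)))\<^sup>2 / (2 * \<gamma>))
                 \<le> g v + ereal ((norm (2 *\<^sub>R y (Suc t) - x t - v))\<^sup>2 / (2 * \<gamma>))"
      and xup: "\<forall>t. x (Suc t) = x t + 2 *\<^sub>R (z (Suc t) - y (Suc t))"
      and t1: "t \<ge> 1"
    have grad: "f' (y (Suc s)) = (1/\<gamma>) *\<^sub>R (x s - y (Suc s))" for s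
    proof -
      let ?u = "y (Suc s)"
      have d: "((\<lambda>v. f v + ((v - x s) \<bullet> (v - x s)) / (2*\<gamma>)) has_derivative
          (\<lambda>h. f' ?u \<bullet> h + ((?u - x s) \<bullet> h) / \<gamma>)) (at ?u)"
        apply (rule derivative_eq_intros refl deriv[rule_format] | (insert gp, simp; fail))+
        apply (rule ext)
        apply (insert gp)
        apply (auto simp: inner_simps algebra_simps inner_commute add_divide_distrib diff_divide_distrib)
        done
      have hz: "(\<lambda>h. f' ?u \<bullet> h + ((?u - x s) \<bullet> h) / \<gamma>) = (\<lambda>h. 0)"
        apply (rule has_derivative_local_min[OF d])
        using ymin by (simp add: power2_norm_eq_inner)
      define V where "V = f' ?u - (1/\<gamma>) *\<^sub>R (x s - ?u)"
      from fun_cong[OF hz, of V]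
      have h0: "f' ?u \<bullet> V + ((?u - x s) \<bullet> V) / \<gamma> = 0" by simp
      have V2: "V = f' ?u + (1/\<gamma>) *\<^sub>R (?u - x s)" unfolding V_def by (simp add: scaleR_diff_right)
      have "V \<bullet> V = f' ?u \<bullet> V + ((?u - x s) \<bullet> V) / \<gamma>"
        by (subst (1) V2) (simp add: inner_add_left divide_inverse mult.commute)
      hence "V \<bullet> V = 0" using h0 by simp
      hence "(f' ?u - (1/\<gamma>) *\<^sub>R (x s - ?u)) \<bullet> (f' ?u - (1/\<gamma>) *\<^sub>R (x s - ?u)) = 0"
        unfolding V_def .
      thus ?thesis by simp
    qed
    obtain s where ts: "t = Suc s" using t1 by (cases t) auto
    define Y where "Y = y t"
    define Z where "Z = z t"
    define X where "X = x t"
    define A where "A = 2 *\<^sub>R y (Suc s) - x s"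
    have gm: "\<forall>v. g v \<noteq> -\<infinity>" using gprop by (simp add: proper_fun_def)
    obtain v0 where v0: "g v0 \<noteq> \<infinity>" using gprop by (auto simp: proper_fun_def)
    have zm: "\<forall>v. g Z + ereal ((norm (A - Z))\<^sup>2 / (2 * \<gamma>)) \<le> g v + ereal ((norm (A - v))\<^sup>2 / (2 * \<gamma>))"
      using zmin unfolding Z_def A_def ts by blast
    have "g Z \<noteq> \<infinity>"
    proof
      assume "g Z = \<infinity>"
      with zm[rule_format, of v0] v0 gm show False by (cases "g v0") auto
    qed
    then obtain gz where gZ: "g Z = ereal gz" using gm[rule_format, of Z] by (cases "g Z") auto
    define w where "w = (f' Y + (1/\<gamma>) *\<^sub>R (2 *\<^sub>R Z - Y - X),
          (1/\<gamma>) *\<^sub>R (A - Z) + (1/\<gamma>) *\<^sub>R (2 *\<^sub>R Y - 3 *\<^sub>R Z + X),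
          (1/\<gamma>) *\<^sub>R (Z - Y))"
    have wF: "w \<in> frechet_subdiff (merit \<gamma> f g) (Y, Z, X)"
      unfolding w_def by (rule frechet_merit[OF gp deriv[rule_format] gZ gm zm])
    have wL: "w \<in> limiting_subdiff (merit \<gamma> f g) (Y, Z, X)"
    proof -
      have fin: "\<bar>merit \<gamma> f g (Y, Z, X)\<bar> \<noteq> \<infinity>" using wF unfolding frechet_subdiff_def mem_Collect_eq by (rule conjunct1)
      show ?thesis unfolding limiting_subdiff_def mem_Collect_eq
        apply (rule conjI[OF fin])
        apply (rule exI[of _ "\<lambda>_. (Y,Z,X)"], rule exI[of _ "\<lambda>_. w"])
        using wF by simp
    qed
    have gY: "f' Y = (1/\<gamma>) *\<^sub>R (x s - Y)" unfolding Y_def ts by (rule grad)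
    have XX: "X = x s + 2 *\<^sub>R (Z - Y)" unfolding X_def Y_def Z_def ts using xup by blast
    have wE: "w = (0, (2/\<gamma>) *\<^sub>R (Y - Z), (1/\<gamma>) *\<^sub>R (Z - Y))"
    proof -
      have AY: "A = 2 *\<^sub>R Y - x s" unfolding A_def Y_def ts ..
      have c1: "f' Y + (1/\<gamma>) *\<^sub>R (2 *\<^sub>R Z - Y - X) = (1/\<gamma>) *\<^sub>R ((x s - Y) + (2 *\<^sub>R Z - Y - X))"
        by (simp add: gY scaleR_add_right)
      have c1': "(x s - Y) + (2 *\<^sub>R Z - Y - X) = 0" by (simp add: XX algebra_simps scaleR_2)
      have c2: "(1/\<gamma>) *\<^sub>R (A - Z) + (1/\<gamma>) *\<^sub>R (2 *\<^sub>R Y - 3 *\<^sub>R Z + X) = (1/\<gamma>) *\<^sub>R ((A - Z) + (2 *\<^sub>R Y - 3 *\<^sub>R Z + X))"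
        by (simp add: scaleR_add_right)
      have three: "(3::real) *\<^sub>R Z = Z + Z + Z"
      proof -
        have "(3::real) *\<^sub>R Z = (2 + 1) *\<^sub>R Z" by simp
        also have "\<dots> = Z + Z + Z" by (simp only: scaleR_add_left scaleR_2 scaleR_one)
        finally show ?thesis .
      qed
      have c2': "(A - Z) + (2 *\<^sub>R Y - 3 *\<^sub>R Z + X) = 2 *\<^sub>R (Y - Z)"
      proof -
        have e: "2 *\<^sub>R Z + 2 *\<^sub>R Z = Z + 3 *\<^sub>R Z"
          using scaleR_add_left[of 1 3 Z] scaleR_add_left[of 2 2 Z] by simp
        have "(A - Z) + (2 *\<^sub>R Y - 3 *\<^sub>R Z + X) - 2 *\<^sub>R (Y - Z) = 2 *\<^sub>R Z + 2 *\<^sub>R Z - (Z + 3 *\<^sub>R Z)"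
          by (simp add: XX AY algebra_simps)
        thus ?thesis using e by simp
      qed
      show ?thesis unfolding w_def c1 c1' c2 c2' by simp
    qed
    have nw: "norm w \<le> (3/\<gamma>) * norm (Y - Z)"
    proof -
      have "norm w \<le> norm (0::'a) + norm ((2/\<gamma>) *\<^sub>R (Y - Z)) + norm ((1/\<gamma>) *\<^sub>R (Z - Y))"
        unfolding wE
      proof -
        have a: "norm ((2/\<gamma>) *\<^sub>R (Y - Z), (1/\<gamma>) *\<^sub>R (Z - Y)) \<le> norm ((2/\<gamma>) *\<^sub>R (Y - Z)) + norm ((1/\<gamma>) *\<^sub>R (Z - Y))"
          by (rule norm_Pair_le)
        have b: "norm (0::'a, ((2/\<gamma>) *\<^sub>R (Y - Z), (1/\<gamma>) *\<^sub>R (Z - Y))) \<le> norm (0::'a) + norm ((2/\<gamma>) *\<^sub>R (Y - Z), (1/\<gamma>) *\<^sub>R (Z - Y))"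
          by (rule norm_Pair_le)
        from a b show "norm (0::'a, (2/\<gamma>) *\<^sub>R (Y - Z), (1/\<gamma>) *\<^sub>R (Z - Y)) \<le> norm (0::'a) + norm ((2/\<gamma>) *\<^sub>R (Y - Z)) + norm ((1/\<gamma>) *\<^sub>R (Z - Y))"
          by linarith
      qed
      also have "\<dots> = (3/\<gamma>) * norm (Y - Z)" using gp by (simp add: norm_minus_commute)
      finally show ?thesis .
    qed
    have xs: "x s = Y + \<gamma> *\<^sub>R f' Y" using gY gp by simp
    have xt: "X = y (Suc t) + \<gamma> *\<^sub>R f' (y (Suc t))" using grad[of t] gp unfolding X_def by simp
    have "2 *\<^sub>R (Z - Y) = X - x s" by (simp add: XX)
    also have "\<dots> = (y (Suc t) - Y) + \<gamma> *\<^sub>R (f' (y (Suc t)) - f' Y)"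
      unfolding xs xt by (simp add: algebra_simps)
    finally have eq2: "2 *\<^sub>R (Z - Y) = (y (Suc t) - Y) + \<gamma> *\<^sub>R (f' (y (Suc t)) - f' Y)" .
    have lipb: "norm (f' (y (Suc t)) - f' Y) \<le> L * norm (y (Suc t) - Y)"
      using lipschitz_onD[OF lip, of "y (Suc t)" Y] by (simp add: dist_norm)
    have "2 * norm (Y - Z) = norm (2 *\<^sub>R (Z - Y))" by (simp add: norm_minus_commute)
    also have "\<dots> \<le> norm (y (Suc t) - Y) + \<gamma> * norm (f' (y (Suc t)) - f' Y)"
      unfolding eq2 using gp by (metis abs_of_pos norm_scaleR norm_triangle_ineq)
    also have "\<dots> \<le> norm (y (Suc t) - Y) + \<gamma> * (L * norm (y (Suc t) - Y))"
      using lipb gp by simp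
    finally have yz: "2 * norm (Y - Z) \<le> (1 + \<gamma> * L) * norm (y (Suc t) - Y)" by (simp add: algebra_simps)
    show "limiting_subdiff (merit \<gamma> f g) (y t, z t, x t) \<noteq> {}"
      using wL unfolding Y_def Z_def X_def by blast
    have "infdist 0 (limiting_subdiff (merit \<gamma> f g) (y t, z t, x t)) \<le> norm w"
      using infdist_le[OF wL[unfolded Y_def Z_def X_def], of 0] by simp
    also have "\<dots> \<le> (3/\<gamma>) * norm (Y - Z)" by (rule nw)
    also have "\<dots> = (3/(2*\<gamma>)) * (2 * norm (Y - Z))" by simp
    also have "\<dots> \<le> (3/(2*\<gamma>)) * ((1 + \<gamma> * L) * norm (y (Suc t) - Y))"
      using yz gp by (intro mult_left_mono) auto
    also have "\<dots> = (3/2) * ((1 + \<gamma> * L) / \<gamma> * norm (y (Suc t) - Y))"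
      using gp by simp
    also have "\<dots> \<le> 2 * ((1 + \<gamma> * L) / \<gamma> * norm (y (Suc t) - Y))"
      using gp Lp by (intro mult_right_mono) auto
    also have "\<dots> = 2 * (1 + \<gamma> * L) / \<gamma> * norm (y (Suc t) - y t)"
      by (simp add: Y_def)
    finally show "infdist 0 (limiting_subdiff (merit \<gamma> f g) (y t, z t, x t)) \<le> 2 * (1 + \<gamma> * L) / \<gamma> * norm (y (Suc t) - y t)" .
  qed
qed

end
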